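(* Let $a,b,e\in\mathbb Z$ with $a\neq 0$, $e>0$, such that $h_2(j)=aj^2+bj+e$ satisfies $h_2(j)\ge 0$ for all integers $j\ge 0$ (so $h_2\in\mathcal H_0$; necessarily $a>0$). Let $\alpha=a/e$, $\beta=b/e$. If $\alpha+\beta<2$, then $\operatorname{hdepth}(h_2)=c(h_2)$. If $\alpha+\beta\ge 2$, then $\operatorname{hdepth}(h_2)\ge 2$.
   Context: Let $\mathcal H_0$ denote the set of functions $h:\mathbb Z_{\ge 0}\to\mathbb Z_{\ge 0}$ with $h(0)>0$. For $h\in\mathcal H_0$ and integers $0\le k\le d$, put $\beta_k^d(h)=\sum_{j=0}^k(-1)^{k-j}\binom{d-j}{k-j}h(j)$. The Hilbert depth of $h$ is $\operatorname{hdepth}(h)=\max\{d\in\mathbb Z_{\ge0}:\ \beta_k^d(h)\ge 0\text{ for all }0\le k\le d\}$; this set contains $d=0$ and is known to be bounded above by $c(h):=\lfloor h(1)/h(0)\rfloor$, so the maximum exists. Note $c(h_2)=\lfloor\alpha+\beta\rfloor+1$. *)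

theory Defs
  imports Complex_Main
begin

definition hbeta :: "nat \<Rightarrow> nat \<Rightarrow> (nat \<Rightarrow> int) \<Rightarrow> int" where
  "hbeta k d h = (\<Sum>j=0..k. (-1) ^ (k - j) * int ((d - j) choose (k - j)) * h j)"

definition hdepth :: "(nat \<Rightarrow> int) \<Rightarrow> nat" where
  "hdepth h = Max {d. \<forall>k\<le>d. hbeta k d h \<ge> 0}"

definition cbound :: "(nat \<Rightarrow> int) \<Rightarrow> int" where
  "cbound h = \<lfloor>(of_int (h 1) :: real) / of_int (h 0)\<rfloor>"

end

theory Submission
  imports Defs
begin

lemma hb0: "hbeta 0 d h = h 0"
  by (simp add: hbeta_def)

lemma hb1: "hbeta 1 d h = h 1 - int d * h 0"
  by (simp add: hbeta_def)

lemma hb2: "hbeta 2 2 h = h 0 - h 1 + h 2"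
  by (simp add: hbeta_def numeral_2_eq_2)

lemma two_in: assumes "h 0 \<ge> 0" "h 1 - 2 * h 0 \<ge> 0" "h 0 - h 1 + h 2 \<ge> 0"
  shows "\<forall>k\<le>2. hbeta k 2 h \<ge> 0"
proof (intro allI impI)
  fix k :: nat assume "k \<le> 2"
  hence "k = 0 \<or> k = 1 \<or> k = 2" by linarith
  thus "hbeta k 2 h \<ge> 0" using assms hb0[of 2 h] hb1[of 2 h] hb2[of h] by auto
qed

theorem lemma2p2:
  fixes a b e :: int
  assumes "a \<noteq> 0" and "e > 0"
    and "\<forall>j::nat. a * int j ^ 2 + b * int j + e \<ge> 0"
  shows "(real_of_int a / real_of_int e + real_of_int b / real_of_int e < 2 \<longrightarrow>
            int (hdepth (\<lambda>j. a * int j ^ 2 + b * int j + e)) = cbound (\<lambda>j. a * int j ^ 2 + b * int j + e))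
       \<and> (real_of_int a / real_of_int e + real_of_int b / real_of_int e \<ge> 2 \<longrightarrow>
            hdepth (\<lambda>j. a * int j ^ 2 + b * int j + e) \<ge> 2)"
proof -
  define h where "h = (\<lambda>j::nat. a * int j ^ 2 + b * int j + e)"
  define S where "S = {d. \<forall>k\<le>d. hbeta k d h \<ge> 0}"
  have h0: "h 0 = e" and h1: "h 1 = a + b + e" and h2: "h 2 = 4*a + 2*b + e"
    by (simp_all add: h_def)
  have h1': "h (Suc 0) = a + b + e" by (simp add: h_def)
  have hd: "hdepth h = Max S" by (simp add: hdepth_def S_def)
  have h1nn: "a+b+e \<ge> 0" using assms(3)[rule_format, of 1] by simp
  have Sbd: "int d * e \<le> a + b + e" if "d \<in> S" for d
  proof (cases d)
    case 0 thus ?thesis using h1nn by simp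
  next
    case (Suc n)
    have "hbeta 1 d h \<ge> 0" using that Suc by (auto simp: S_def)
    thus ?thesis using hb1[of d h] h0 h1 by simp
  qed
  have fin: "finite S"
  proof (rule finite_subset)
    show "S \<subseteq> {..nat (a+b+e)}"
    proof
      fix d assume "d \<in> S"
      from Sbd[OF this] have "int d * e \<le> a+b+e" .
      moreover have "int d \<le> int d * e" using assms(2) by (simp add: mult_le_cancel_left1)
      ultimately show "d \<in> {..nat (a+b+e)}" by simp
    qed
  qed simp
  have S0: "0 \<in> S" using assms(2) by (simp add: S_def hb0 h0)
  have apos: "a > 0"
  proof (rule ccontr)
    assume "\<not> a > 0"
    hence an: "a \<le> -1" using assms(1) by simp
    define j where "j = nat (\<bar>b\<bar> + e + 1)"
    have ji: "int j = \<bar>b\<bar> + e + 1" using assms(2) by (simp add: j_def)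
    have "a * int j ^ 2 \<le> - (int j ^ 2)" using an mult_right_mono[OF an, of "int j ^ 2"] by simp
    moreover have "b * int j \<le> \<bar>b\<bar> * int j" by (simp add: mult_right_mono)
    moreover have "- (int j ^ 2) + \<bar>b\<bar> * int j + e < 0"
    proof -
      have "- (int j ^ 2) + \<bar>b\<bar> * int j = - int j * (e + 1)" by (simp add: ji power2_eq_square algebra_simps)
      moreover have "int j * (e+1) > e" using ji assms(2)
        by (smt (verit) mult_less_cancel_right1 abs_ge_zero)
      ultimately show ?thesis by simp
    qed
    ultimately have "a * int j ^ 2 + b * int j + e < 0" by linarith
    thus False using assms(3) by (meson not_le)
  qed
  have real_eq: "real_of_int a / real_of_int e + real_of_int b / real_of_int e = real_of_int (a+b) / real_of_int e"
    by (simp add: add_divide_distrib)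
  have lt_iff: "(real_of_int (a+b) / real_of_int e < 2) \<longleftrightarrow> a + b < 2*e"
    using assms(2) by (simp add: divide_less_eq) linarith
  have cb: "cbound h = \<lfloor>real_of_int (a+b+e) / real_of_int e\<rfloor>" unfolding cbound_def h0 h1 ..
  show ?thesis
    unfolding h_def[symmetric] real_eq lt_iff
  proof (intro conjI impI)
    assume lt: "a + b < 2*e"
    have le_c: "int d \<le> cbound h \<longleftrightarrow> int d * e \<le> a+b+e" for d
    proof -
      have "int d \<le> cbound h \<longleftrightarrow> real_of_int (int d) \<le> real_of_int (a+b+e) / real_of_int e"
        unfolding cb by (rule le_floor_iff)
      also have "\<dots> \<longleftrightarrow> real_of_int (int d) * real_of_int e \<le> real_of_int (a+b+e)"
        using assms(2) by (simp add: le_divide_eq)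
      also have "\<dots> \<longleftrightarrow> int d * e \<le> a+b+e"
        by (metis of_int_le_iff of_int_mult)
      finally show ?thesis .
    qed
    have "Max S \<in> S" using fin S0 by (intro Max_in) auto
    hence up: "int (Max S) \<le> cbound h" using le_c Sbd by blast
    have c_le1: "cbound h \<le> 2"
    proof -
      have "real_of_int (a+b+e) / real_of_int e < 3" using lt assms(2) by (simp add: divide_less_eq)
      thus ?thesis unfolding cb by linarith
    qed
    have c_ge0: "cbound h \<ge> 0" unfolding cb using h1nn assms(2) by simp
    have lo: "cbound h \<le> int (Max S)"
    proof -
      consider "cbound h = 2" | "cbound h = 1" | "cbound h = 0" using c_le1 c_ge0 by linarith
      thus ?thesis
      proof cases
        case 1
        hence "int 2 * e \<le> a+b+e" using le_c[of 2] by simp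
        hence "2 \<in> S" unfolding S_def using assms(2) apos
          by (intro CollectI two_in) (simp_all add: h0 h1 h2 h1')
        hence "2 \<le> Max S" using fin by simp
        thus ?thesis using 1 by simp
      next
        case 2
        hence "int 1 * e \<le> a+b+e" using le_c[of 1] by simp
        hence "1 \<in> S" unfolding S_def using assms(2)
          using hb1[of 1 h] hb0[of 1 h] h0 h1 h1' by (auto simp: le_Suc_eq)
        hence "1 \<le> Max S" using fin by simp
        thus ?thesis using 2 by simp
      next
        case 3 thus ?thesis by simp
      qed
    qed
    show "int (hdepth h) = cbound h" using up lo hd by simp
  next
    assume ge: "2 \<le> real_of_int (a + b) / real_of_int e"
    hence "2*e \<le> a+b" using lt_iff by linarith
    hence "2 \<in> S" unfolding S_def using assms(2) apos
          by (intro CollectI two_in) (simp_all add: h0 h1 h2 h1')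
    hence "2 \<le> Max S" using fin by simp
    thus "2 \<le> hdepth h" using hd by simp
  qed
qed

end
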